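(* Assume $\ker(K)\cap\ker(D)=\{0\}$ and let $\Psi$ be a reconstructor. Let $y^0=Kx^{GT}$, and let $\{\delta_k\}_{k\in\mathbb{N}}$ be a sequence of positive noise levels with $\delta_k\to0$ as $k\to\infty$, with data $y^{\delta_k}=Kx^{GT}+e_k$, $\|e_k\|_2\le\delta_k$. For each $k$ let $x^*_{\Psi,\delta_k}$ be the unique minimizer over $\mathcal{X}$ of $\mathcal{J}_{\Psi,\delta_k}(x)=\|Kx-y^{\delta_k}\|_2^2+\lambda\|w(\Psi(y^{\delta_k}))\odot|Dx|\|_1$, and let $x^*_{\Psi,0}$ denote the unique minimizer over $\mathcal{X}$ of $\mathcal{J}_{\Psi,0}(x)=\|Kx-y^{0}\|_2^2+\lambda\|w(\Psi(y^{0}))\odot|Dx|\|_1$. Then $\{x^*_{\Psi,\delta_k}\}_{k\in\mathbb{N}}$ has a convergent subsequence whose limit is $x^*_{\Psi,0}$.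
   Context: Let $K\in\mathbb{R}^{m\times n}$ with $m\le n$, and let $D_h,D_v\in\mathbb{R}^{n\times n}$ be the discrete horizontal and vertical difference operators; $Dx=\begin{bmatrix}D_hx\\ D_vx\end{bmatrix}\in\mathbb{R}^{2n}$, and $|Dx|\in\mathbb{R}^n$, $(|Dx|)_i=\sqrt{(D_hx)_i^2+(D_vx)_i^2}$. $\mathcal{X}=\{x\in\mathbb{R}^n: x_i\ge 0\ \forall i\}$; $x^{GT}\in\mathcal{X}$ is fixed. Fix $\lambda>0$, $\eta>0$, $p\in(0,1)$, and for $\tilde x\in\mathbb{R}^n$ define $(w(\tilde{x}))_i=\big(\eta/\sqrt{\eta^2+(|D\tilde{x}|)_i^2}\big)^{1-p}$. A reconstructor is a Lipschitz continuous map $\Psi:\mathbb{R}^m\to\mathbb{R}^n$. $\odot$ is the entrywise product. *)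

theory Defs
  imports "HOL-Analysis.Analysis"
begin

definition nonneg_orthant :: "(real^'n) set" where
  "nonneg_orthant = {x. \<forall>i. x $ i \<ge> 0}"

text \<open>Pointwise gradient magnitude \<open>|Dx|\<close>, \<open>Dx = [D_h x; D_v x]\<close>.\<close>
definition grad_mag :: "real^'n^'n \<Rightarrow> real^'n^'n \<Rightarrow> real^'n \<Rightarrow> real^'n" where
  "grad_mag Dh Dv x = (\<chi> i. sqrt (((Dh *v x) $ i)\<^sup>2 + ((Dv *v x) $ i)\<^sup>2))"

definition weights :: "real^'n^'n \<Rightarrow> real^'n^'n \<Rightarrow> real \<Rightarrow> real \<Rightarrow> real^'n \<Rightarrow> real^'n" where
  "weights Dh Dv \<eta> p xt =
     (\<chi> i. (\<eta> / sqrt (\<eta>\<^sup>2 + ((grad_mag Dh Dv xt) $ i)\<^sup>2)) powr (1 - p))"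

definition norm1 :: "real^'n \<Rightarrow> real" where
  "norm1 v = (\<Sum>i\<in>UNIV. \<bar>v $ i\<bar>)"

definition objJ :: "real^'n^'m \<Rightarrow> real^'n^'n \<Rightarrow> real^'n^'n \<Rightarrow> real \<Rightarrow> real \<Rightarrow> real
      \<Rightarrow> (real^'m \<Rightarrow> real^'n) \<Rightarrow> real^'m \<Rightarrow> real^'n \<Rightarrow> real" where
  "objJ K Dh Dv lam \<eta> p \<Psi> y x =
     (norm (K *v x - y))\<^sup>2
     + lam * norm1 (weights Dh Dv \<eta> p (\<Psi> y) * grad_mag Dh Dv x)"

definition is_unique_minimizer :: "('a \<Rightarrow> real) \<Rightarrow> 'a set \<Rightarrow> 'a \<Rightarrow> bool" where
  "is_unique_minimizer f S x \<longleftrightarrow>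
     x \<in> S \<and> (\<forall>z\<in>S. f x \<le> f z) \<and> (\<forall>x'\<in>S. (\<forall>z\<in>S. f x' \<le> f z) \<longrightarrow> x' = x)"

end

theory Submission
  imports Defs
begin



lemma mv_tendsto:
  fixes A :: "real^'n^'m"
  assumes "(xk \<longlongrightarrow> x) F"
  shows "((\<lambda>k. A *v xk k) \<longlongrightarrow> A *v x) F"
proof -
  have "bounded_linear ((*v) A)" by (simp add: bounded_linearI' matrix_vector_right_distrib)
  then show ?thesis using bounded_linear.tendsto assms by blast
qed

lemma gm_tendsto:
  assumes "(xk \<longlongrightarrow> x) F"
  shows "((\<lambda>k. grad_mag Dh Dv (xk k)) \<longlongrightarrow> grad_mag Dh Dv x) F"
  unfolding grad_mag_def
  apply (rule tendsto_vec_lambda)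
  apply (intro tendsto_real_sqrt tendsto_add tendsto_power tendsto_vec_nth mv_tendsto assms)
  done

lemma weights_tendsto:
  assumes "(xk \<longlongrightarrow> x) F" "\<eta> > 0"
  shows "((\<lambda>k. weights Dh Dv \<eta> p (xk k)) \<longlongrightarrow> weights Dh Dv \<eta> p x) F"
  unfolding weights_def
  apply (rule tendsto_vec_lambda)
  apply (rule tendsto_powr)
  apply (intro tendsto_divide tendsto_const tendsto_real_sqrt tendsto_add tendsto_power tendsto_vec_nth gm_tendsto assms)
  using assms(2) by (auto simp: add_pos_nonneg)

lemma vmult_tendsto:
  fixes a b :: "'x \<Rightarrow> real^'n"
  assumes "(a \<longlongrightarrow> A) F" "(b \<longlongrightarrow> B) F"
  shows "((\<lambda>k. a k * b k) \<longlongrightarrow> A * B) F"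
  unfolding times_vec_def
  by (intro tendsto_vec_lambda tendsto_mult tendsto_vec_nth assms)

lemma objJ_tendsto:
  assumes "continuous_on UNIV \<Psi>" "\<eta> > 0" "(yk \<longlongrightarrow> y) F" "(xk \<longlongrightarrow> x) F"
  shows "((\<lambda>k. objJ K Dh Dv lam \<eta> p \<Psi> (yk k) (xk k)) \<longlongrightarrow> objJ K Dh Dv lam \<eta> p \<Psi> y x) F"
proof -
  have "((\<lambda>k. \<Psi> (yk k)) \<longlongrightarrow> \<Psi> y) F"
    using assms(1,3) continuous_on_tendsto_compose by fastforce
  then show ?thesis unfolding objJ_def norm1_def
    by (intro tendsto_add tendsto_mult tendsto_const tendsto_sum tendsto_rabs tendsto_vec_nth tendsto_power tendsto_norm tendsto_diff vmult_tendsto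
       weights_tendsto gm_tendsto mv_tendsto assms)
qed

lemma coercive:
  fixes K :: "real^'n^'m" and Dh Dv :: "real^'n^'n"
  assumes ker: "\<forall>x. K *v x = 0 \<and> Dh *v x = 0 \<and> Dv *v x = 0 \<longrightarrow> x = 0"
  obtains B where "B > 0" "\<And>x. B * norm x \<le> norm (K *v x) + norm (Dh *v x) + norm (Dv *v x)"
proof -
  define L where "L = (\<lambda>x. (K *v x, (Dh *v x, Dv *v x)))"
  have lin: "linear L" unfolding L_def
    by (rule bounded_linear.linear[OF bounded_linear_Pair[OF matrix_vector_mul_bounded_linear bounded_linear_Pair[OF matrix_vector_mul_bounded_linear matrix_vector_mul_bounded_linear]]])
  have "inj L"
  proof (rule linear_injective_0[OF lin, THEN iffD2], intro allI impI)
    fix x assume "L x = 0"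
    then have "K *v x = 0 \<and> Dh *v x = 0 \<and> Dv *v x = 0" unfolding L_def zero_prod_def by auto
    then show "x = 0" using ker by blast
  qed
  then obtain B where B: "B > 0" "\<And>x. B * norm x \<le> norm (L x)"
    using linear_inj_bounded_below_pos[OF lin] by blast
  have "norm (L x) \<le> norm (K *v x) + norm (Dh *v x) + norm (Dv *v x)" for x
  proof -
    have "norm (L x) \<le> norm (K *v x) + norm (Dh *v x, Dv *v x)" unfolding L_def by (rule norm_Pair_le)
    also have "\<dots> \<le> norm (K *v x) + (norm (Dh *v x) + norm (Dv *v x))" using norm_Pair_le by simp
    finally show ?thesis by simp
  qed
  then show ?thesis using B that order_trans by blast
qed

lemma gm_ge0: "grad_mag Dh Dv x $ i \<ge> 0"
  unfolding grad_mag_def by simp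

lemma normDh_le: "norm (Dh *v x) \<le> norm1 (grad_mag Dh Dv x)"
proof -
  have "norm (Dh *v x) \<le> (\<Sum>i\<in>UNIV. \<bar>(Dh *v x) $ i\<bar>)" by (rule norm_le_l1_cart)
  also have "\<dots> \<le> norm1 (grad_mag Dh Dv x)" unfolding norm1_def grad_mag_def
    apply (intro sum_mono) 
    by (simp add: real_sqrt_sum_squares_ge1 real_sqrt_abs[symmetric] del: real_sqrt_abs)
  finally show ?thesis .
qed

lemma normDv_le: "norm (Dv *v x) \<le> norm1 (grad_mag Dh Dv x)"
proof -
  have "norm (Dv *v x) \<le> (\<Sum>i\<in>UNIV. \<bar>(Dv *v x) $ i\<bar>)" by (rule norm_le_l1_cart)
  also have "\<dots> \<le> norm1 (grad_mag Dh Dv x)" unfolding norm1_def grad_mag_def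
    apply (intro sum_mono) 
    by (simp add: real_sqrt_sum_squares_ge2 real_sqrt_abs[symmetric] del: real_sqrt_abs)
  finally show ?thesis .
qed

lemma weighted_ge:
  fixes W g :: "real^'n"
  assumes "\<forall>i. W $ i \<ge> c" "c > 0" "\<forall>i. g $ i \<ge> 0"
  shows "c * norm1 g \<le> norm1 (W * g)"
  unfolding norm1_def sum_distrib_left
proof (intro sum_mono)
  fix i
  have "c * g $ i \<le> W $ i * g $ i" using assms by (intro mult_right_mono) auto
  then show "c * \<bar>g $ i\<bar> \<le> \<bar>(W * g) $ i\<bar>" using assms by simp
qed


lemma le_1_sq: "(t::real) \<le> 1 + t\<^sup>2"
proof -
  have "0 \<le> (t - 1)\<^sup>2" by simp
  then have "2 * t \<le> 1 + t\<^sup>2" by (simp add: power2_eq_square algebra_simps)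
  moreover have "0 \<le> t\<^sup>2" by simp
  ultimately show ?thesis by linarith
qed

theorem theorem3:
  fixes K :: "real^'n^'m" and Dh Dv :: "real^'n^'n"
    and xGT :: "real^'n" and lam \<eta> p :: real
    and \<Psi> :: "real^'m \<Rightarrow> real^'n"
    and \<delta> :: "nat \<Rightarrow> real" and e :: "nat \<Rightarrow> real^'m"
    and xs :: "nat \<Rightarrow> real^'n" and x0 :: "real^'n"
  assumes mn: "CARD('m) \<le> CARD('n)"
    and lam: "lam > 0" and eta: "\<eta> > 0" and p: "0 < p" "p < 1"
    and xGT: "xGT \<in> nonneg_orthant"
    and ker: "\<forall>x. K *v x = 0 \<and> Dh *v x = 0 \<and> Dv *v x = 0 \<longrightarrow> x = 0"
    and Psi: "\<exists>C. C-lipschitz_on UNIV \<Psi>"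
    and delta_pos: "\<forall>k. \<delta> k > 0" and delta_lim: "\<delta> \<longlonglongrightarrow> 0"
    and noise: "\<forall>k. norm (e k) \<le> \<delta> k"
    and xs: "\<forall>k. is_unique_minimizer (objJ K Dh Dv lam \<eta> p \<Psi> (K *v xGT + e k)) nonneg_orthant (xs k)"
    and x0: "is_unique_minimizer (objJ K Dh Dv lam \<eta> p \<Psi> (K *v xGT)) nonneg_orthant x0"
  shows "\<exists>r. strict_mono r \<and> (xs \<circ> r) \<longlonglongrightarrow> x0"
proof -
  define y where "y = (\<lambda>k. K *v xGT + e k)"
  define y0 where "y0 = K *v xGT"
  define J where "J = objJ K Dh Dv lam \<eta> p \<Psi>"
  have cont: "continuous_on UNIV \<Psi>" using Psi lipschitz_on_continuous_on by blast
  have "e \<longlonglongrightarrow> 0"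
  proof (rule tendsto_norm_zero_cancel)
    show "(\<lambda>k. norm (e k)) \<longlonglongrightarrow> 0"
      by (rule Lim_null_comparison[of _ \<delta>]) (use noise delta_lim in auto)
  qed
  then have ylim: "y \<longlonglongrightarrow> y0" unfolding y_def y0_def using tendsto_add[of "\<lambda>_. K *v xGT" _ _ e 0] by simp
  define W where "W = (\<lambda>k. weights Dh Dv \<eta> p (\<Psi> (y k)))"
  define W0 where "W0 = weights Dh Dv \<eta> p (\<Psi> y0)"
  have Wlim: "W \<longlonglongrightarrow> W0" unfolding W_def W0_def
    by (intro weights_tendsto eta continuous_on_tendsto_compose[OF cont ylim]) auto
  have W0pos: "W0 $ i > 0" for i
    unfolding W0_def weights_def using eta by (simp add: add_pos_nonneg)
  define c where "c = Min (range (\<lambda>i. W0 $ i)) / 2"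
  have cpos: "c > 0" unfolding c_def using W0pos by (simp add: Min_gr_iff)
  have "\<forall>\<^sub>F k in sequentially. \<forall>i. c < W k $ i"
  proof (rule eventually_all_finite)
    fix i
    have "Min (range (\<lambda>i. W0 $ i)) \<le> W0 $ i" by (rule Min_le) auto
    then have "c < W0 $ i" unfolding c_def using W0pos[of i] by linarith
    then show "\<forall>\<^sub>F k in sequentially. c < W k $ i"
      using order_tendstoD(1)[OF tendsto_vec_nth[OF Wlim]] by blast
  qed
  then obtain N where N: "\<And>k i. k \<ge> N \<Longrightarrow> c < W k $ i" unfolding eventually_sequentially by blast
  have "(\<lambda>k. J (y k) xGT) \<longlonglongrightarrow> J y0 xGT" unfolding J_def
    by (intro objJ_tendsto cont eta ylim tendsto_const)
  then obtain A where A: "\<And>k. norm (J (y k) xGT) \<le> A" by (metis convergentI convergent_imp_Bseq BseqE)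
  obtain Y where Y: "\<And>k. norm (y k) \<le> Y" using ylim by (metis convergentI convergent_imp_Bseq BseqE)
  obtain B where B: "B > 0" "\<And>x. B * norm x \<le> norm (K *v x) + norm (Dh *v x) + norm (Dv *v x)"
    using coercive[OF ker] by blast
  define M where "M = (1 + A + Y + 2 * (A / (lam * c))) / B"
  have bnd: "norm (xs k) \<le> M" if "k \<ge> N" for k
  proof -
    have xsk: "xs k \<in> nonneg_orthant" "\<forall>z\<in>nonneg_orthant. J (y k) (xs k) \<le> J (y k) z"
      using xs unfolding is_unique_minimizer_def J_def y_def by auto
    have JA: "J (y k) (xs k) \<le> A" using xsk(2) xGT A[of k] by force
    have t1: "(norm (K *v xs k - y k))\<^sup>2 \<ge> 0" by simp
    have W1: "norm1 (W k * grad_mag Dh Dv (xs k)) \<ge> 0" unfolding norm1_def by (simp add: sum_nonneg)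
    have Jeq: "J (y k) (xs k) = (norm (K *v xs k - y k))\<^sup>2 + lam * norm1 (W k * grad_mag Dh Dv (xs k))"
      unfolding J_def objJ_def W_def by simp
    have a1: "(norm (K *v xs k - y k))\<^sup>2 \<le> A" using JA Jeq W1 lam by (smt (verit) mult_nonneg_nonneg)
    have "norm (K *v xs k - y k) \<le> 1 + (norm (K *v xs k - y k))\<^sup>2"
      by (rule le_1_sq)
    then have "norm (K *v xs k - y k) \<le> 1 + A" using a1 by linarith
    then have nK: "norm (K *v xs k) \<le> 1 + A + Y" using Y[of k] norm_triangle_sub[of "K *v xs k" "y k"]
      by (smt (verit) norm_minus_commute norm_triangle_ineq)
    have "lam * norm1 (W k * grad_mag Dh Dv (xs k)) \<le> A" using JA Jeq t1 by linarith
    moreover have "c * norm1 (grad_mag Dh Dv (xs k)) \<le> norm1 (W k * grad_mag Dh Dv (xs k))"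
      using N[OF that] cpos gm_ge0 by (intro weighted_ge) (auto intro: less_imp_le)
    ultimately have "lam * (c * norm1 (grad_mag Dh Dv (xs k))) \<le> A"
      using lam by (smt (verit) mult_left_mono)
    then have g: "norm1 (grad_mag Dh Dv (xs k)) \<le> A / (lam * c)"
      using lam cpos by (simp add: field_simps)
    have "B * norm (xs k) \<le> 1 + A + Y + 2 * (A / (lam * c))"
      using B(2)[of "xs k"] nK g normDh_le[of Dh "xs k" Dv] normDv_le[of Dv "xs k" Dh] by linarith
    then show ?thesis unfolding M_def using B(1) by (simp add: field_simps)
  qed
  define xs' where "xs' = (\<lambda>k. xs (k + N))"
  have "bounded (range xs')" unfolding bounded_iff xs'_def
  proof (intro exI allI ballI)
    fix v assume "v \<in> range (\<lambda>k. xs (k + N))"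
    then obtain k where "v = xs (k + N)" by blast
    then show "norm v \<le> M" using bnd[of "k + N"] by simp
  qed
  then obtain l r where r: "strict_mono r" "(xs' \<circ> r) \<longlonglongrightarrow> l"
    using bounded_imp_convergent_subsequence by blast
  define s where "s = (\<lambda>k. r k + N)"
  have s: "strict_mono s" using r(1) unfolding s_def strict_mono_def by auto
  have xsl: "(xs \<circ> s) \<longlonglongrightarrow> l" using r(2) unfolding s_def xs'_def o_def by simp
  have ysl: "(y \<circ> s) \<longlonglongrightarrow> y0" using LIMSEQ_subseq_LIMSEQ[OF ylim s] .
  have xsX: "xs k \<in> nonneg_orthant" "\<forall>z\<in>nonneg_orthant. J (y k) (xs k) \<le> J (y k) z" for k
    using xs unfolding is_unique_minimizer_def J_def y_def by auto
  have lX: "l \<in> nonneg_orthant" unfolding nonneg_orthant_def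
  proof (intro CollectI allI)
    fix i
    show "l $ i \<ge> 0"
      using xsX(1) unfolding nonneg_orthant_def
      by (intro LIMSEQ_le_const[OF tendsto_vec_nth[OF xsl]]) auto
  qed
  have lmin: "\<forall>z\<in>nonneg_orthant. J y0 l \<le> J y0 z"
  proof
    fix z :: "real^'n" assume z: "z \<in> nonneg_orthant"
    have L1: "(\<lambda>k. J ((y \<circ> s) k) ((xs \<circ> s) k)) \<longlonglongrightarrow> J y0 l" unfolding J_def
      by (intro objJ_tendsto cont eta ysl xsl)
    have L2: "(\<lambda>k. J ((y \<circ> s) k) z) \<longlonglongrightarrow> J y0 z" unfolding J_def
      by (intro objJ_tendsto cont eta ysl tendsto_const)
    show "J y0 l \<le> J y0 z"
      by (rule LIMSEQ_le[OF L1 L2]) (use xsX(2) z in auto)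
  qed
  have "l = x0" using x0 lX lmin unfolding is_unique_minimizer_def J_def y0_def by blast
  then show ?thesis using s xsl by blast
qed

end
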